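(* Let $\mathcal M$ be a stopping finite MDP with sink state $z$, and $\Phi=(F,r)$ a weighted reachability objective with outcome vector $\vec o=(o_1,\dots,o_k)$. Let $\mathcal Q=(\mathrm{obtainset}(o_1),\dots,\mathrm{obtainset}(o_k))$. Then $$\{\mathrm{prospect}(\mathcal M^\sigma,\Phi):\sigma\in\Sigma\}=\{(\vec o,\vec p):\vec p\in\mathcal P^{\mathcal Q}_{\mathcal M}\}.$$
   Context: MDP: $\mathcal M=(S,s_0,A,\delta)$ finite; $\Sigma$ the set of all history-dependent randomized strategies; $\mathbb P^\sigma_{\mathcal M}$ the induced measure on infinite paths from $s_0$. Weighted reachability objective $\Phi=(F,r)$: absorbing targets $F\subseteq S$, $r:F\to\mathbb Q$ with $r(s)\ne0$; $\Phi(\rho)=r$ of the first visited target, $0$ if none. Outcomes $\mathrm{outc}(\Phi)=r(F)\cup\{0\}$ listed increasingly $o_1<\dots<o_k$. $\mathrm{prospect}(\mathcal M^\sigma,\Phi)=(\vec o,\vec p)$ with $p_i=\mathbb P^\sigma_{\mathcal M}[\Phi(\rho)=o_i]$. $\mathcal M$ is stopping with sink $z$ if $z\notin F$ is an absorbing state and $\mathbb P^\sigma_{\mathcal M}[\lozenge(F\cup\{z\})]=1$ for all $\sigma$, where $\lozenge X$ is the set of paths visiting $X$. In a stopping MDP, $\mathrm{obtainset}(o_i)=\{s\in F:r(s)=o_i\}$ for $o_i\ne0$ and $\mathrm{obtainset}(0)=\{z\}$. For a tuple of target sets $\mathcal Q=(F_1,\dots,F_n)$, the achievable set is $\mathcal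 A^{\mathcal Q}_{\mathcal M}=\{(p_1,\dots,p_n):\exists\sigma\in\Sigma\,\forall i.\ p_i\le\mathbb P^\sigma_{\mathcal M}[\lozenge F_i]\}$ and the Pareto frontier is $\mathcal P^{\mathcal Q}_{\mathcal M}=\{\vec u\in\mathcal A^{\mathcal Q}_{\mathcal M}:\neg\exists \vec v\in\mathcal A^{\mathcal Q}_{\mathcal M}.\ \vec u\ne \vec v\wedge \vec u\le \vec v\}$ (componentwise order). *)

theory Defs
  imports "HOL-Probability.Probability_Mass_Function"
begin

definition is_mdp :: "'s set \<Rightarrow> 's \<Rightarrow> ('s \<Rightarrow> 'act set) \<Rightarrow> ('s \<Rightarrow> 'act \<Rightarrow> 's pmf) \<Rightarrow> bool" where
  "is_mdp S s0 A \<delta> \<longleftrightarrow> finite S \<and> s0 \<in> S \<and>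
     (\<forall>s\<in>S. finite (A s) \<and> A s \<noteq> {} \<and> (\<forall>a\<in>A s. set_pmf (\<delta> s a) \<subseteq> S))"

text \<open>Finite path prefixes: a history of (state, action) pairs together with the current state.\<close>

type_synonym ('s,'act) fpath = "('s \<times> 'act) list \<times> 's"

definition is_strategy :: "'s set \<Rightarrow> ('s \<Rightarrow> 'act set) \<Rightarrow> (('s \<times> 'act) list \<Rightarrow> 's \<Rightarrow> 'act pmf) \<Rightarrow> bool" where
  "is_strategy S A \<sigma> \<longleftrightarrow> (\<forall>h. \<forall>s\<in>S. set_pmf (\<sigma> h s) \<subseteq> A s)"

fun path_pmf :: "'s \<Rightarrow> ('s \<Rightarrow> 'act \<Rightarrow> 's pmf) \<Rightarrow> (('s \<times> 'act) list \<Rightarrow> 's \<Rightarrow> 'act pmf) \<Rightarrow> nat \<Rightarrow> ('s,'act) fpath pmf" where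
  "path_pmf s0 \<delta> \<sigma> 0 = return_pmf ([], s0)"
| "path_pmf s0 \<delta> \<sigma> (Suc n) =
     bind_pmf (path_pmf s0 \<delta> \<sigma> n) (\<lambda>(h, s).
       bind_pmf (\<sigma> h s) (\<lambda>a. map_pmf (\<lambda>t. (h @ [(s, a)], t)) (\<delta> s a)))"

definition fp_states :: "('s,'act) fpath \<Rightarrow> 's list" where
  "fp_states \<pi> = map fst (fst \<pi>) @ [snd \<pi>]"

text \<open>Probability of the event \<open>\<lozenge>X\<close> on infinite paths: by continuity of measure it is the limit
  of the probabilities that X is visited within the first n steps (an increasing sequence).\<close>

definition reach_prob :: "'s \<Rightarrow> ('s \<Rightarrow> 'act \<Rightarrow> 's pmf) \<Rightarrow> (('s \<times> 'act) list \<Rightarrow> 's \<Rightarrow> 'act pmf) \<Rightarrow> 's set \<Rightarrow> real" where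
  "reach_prob s0 \<delta> \<sigma> X =
     lim (\<lambda>n. measure_pmf.prob (path_pmf s0 \<delta> \<sigma> n) {\<pi>. \<exists>x\<in>set (fp_states \<pi>). x \<in> X})"

definition wr_value :: "'s set \<Rightarrow> ('s \<Rightarrow> rat) \<Rightarrow> 's list \<Rightarrow> rat" where
  "wr_value F r xs = (case find (\<lambda>x. x \<in> F) xs of None \<Rightarrow> 0 | Some t \<Rightarrow> r t)"

text \<open>\<open>P[\<Phi>(\<rho>) = o]\<close>: limit of the probabilities that the value on the length-n prefix equals o
  (monotone in n: increasing for o \<noteq> 0, decreasing for o = 0, as r(s) \<noteq> 0).\<close>

definition outcome_prob :: "'s \<Rightarrow> ('s \<Rightarrow> 'act \<Rightarrow> 's pmf) \<Rightarrow> (('s \<times> 'act) list \<Rightarrow> 's \<Rightarrow> 'act pmf)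
    \<Rightarrow> 's set \<Rightarrow> ('s \<Rightarrow> rat) \<Rightarrow> rat \<Rightarrow> real" where
  "outcome_prob s0 \<delta> \<sigma> F r ov =
     lim (\<lambda>n. measure_pmf.prob (path_pmf s0 \<delta> \<sigma> n) {\<pi>. wr_value F r (fp_states \<pi>) = ov})"

definition outcomes :: "'s set \<Rightarrow> ('s \<Rightarrow> rat) \<Rightarrow> rat list" where
  "outcomes F r = sorted_list_of_set (r ` F \<union> {0})"

definition prospect :: "'s \<Rightarrow> ('s \<Rightarrow> 'act \<Rightarrow> 's pmf) \<Rightarrow> (('s \<times> 'act) list \<Rightarrow> 's \<Rightarrow> 'act pmf)
    \<Rightarrow> 's set \<Rightarrow> ('s \<Rightarrow> rat) \<Rightarrow> rat list \<times> real list" where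
  "prospect s0 \<delta> \<sigma> F r = (outcomes F r, map (outcome_prob s0 \<delta> \<sigma> F r) (outcomes F r))"

definition stopping :: "'s set \<Rightarrow> 's \<Rightarrow> ('s \<Rightarrow> 'act set) \<Rightarrow> ('s \<Rightarrow> 'act \<Rightarrow> 's pmf) \<Rightarrow> 's set \<Rightarrow> 's \<Rightarrow> bool" where
  "stopping S s0 A \<delta> F z \<longleftrightarrow> z \<in> S \<and> z \<notin> F \<and> (\<forall>a\<in>A z. \<delta> z a = return_pmf z) \<and>
     (\<forall>\<sigma>. is_strategy S A \<sigma> \<longrightarrow> reach_prob s0 \<delta> \<sigma> (F \<union> {z}) = 1)"

definition obtainset :: "'s set \<Rightarrow> ('s \<Rightarrow> rat) \<Rightarrow> 's \<Rightarrow> rat \<Rightarrow> 's set" where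
  "obtainset F r z ov = (if ov = 0 then {z} else {s\<in>F. r s = ov})"

definition achievable :: "'s set \<Rightarrow> 's \<Rightarrow> ('s \<Rightarrow> 'act set) \<Rightarrow> ('s \<Rightarrow> 'act \<Rightarrow> 's pmf) \<Rightarrow> 's set list \<Rightarrow> real list set" where
  "achievable S s0 A \<delta> Q = {p. length p = length Q \<and>
     (\<exists>\<sigma>. is_strategy S A \<sigma> \<and> (\<forall>i<length Q. p ! i \<le> reach_prob s0 \<delta> \<sigma> (Q ! i)))}"

definition vec_le :: "real list \<Rightarrow> real list \<Rightarrow> bool" where
  "vec_le u v \<longleftrightarrow> length u = length v \<and> (\<forall>i<length u. u ! i \<le> v ! i)"

definition pareto :: "'s set \<Rightarrow> 's \<Rightarrow> ('s \<Rightarrow> 'act set) \<Rightarrow> ('s \<Rightarrow> 'act \<Rightarrow> 's pmf) \<Rightarrow> 's set list \<Rightarrow> real list set" where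
  "pareto S s0 A \<delta> Q = {u \<in> achievable S s0 A \<delta> Q.
     \<not> (\<exists>v\<in>achievable S s0 A \<delta> Q. u \<noteq> v \<and> vec_le u v)}"

end

theory Submission
  imports Defs
begin

locale wrs =
  fixes S :: "'s set" and s0 :: 's and A :: "'s \<Rightarrow> 'act set" and \<delta> :: "'s \<Rightarrow> 'act \<Rightarrow> 's pmf"
    and F :: "'s set" and r :: "'s \<Rightarrow> rat" and z :: 's
  assumes mdp: "is_mdp S s0 A \<delta>"
    and F_sub: "F \<subseteq> S"
    and F_absorbing: "\<forall>s\<in>F. \<forall>a\<in>A s. \<delta> s a = return_pmf s"
    and r_nonzero: "\<forall>s\<in>F. r s \<noteq> 0"
    and stop: "stopping S s0 A \<delta> F z"
begin

definition Qd where "Qd \<sigma> n = map_pmf snd (path_pmf s0 \<delta> \<sigma> n)"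

lemma finS: "finite S" using mdp by (simp add: is_mdp_def)
lemma zS: "z \<in> S" and zF: "z \<notin> F" using stop by (auto simp: stopping_def)

lemma absorb: "s \<in> F \<union> {z} \<Longrightarrow> a \<in> A s \<Longrightarrow> \<delta> s a = return_pmf s"
  using F_absorbing stop by (auto simp: stopping_def)

lemma inv:
  assumes st: "is_strategy S A \<sigma>"
  shows "\<pi> \<in> set_pmf (path_pmf s0 \<delta> \<sigma> n) \<Longrightarrow>
     snd \<pi> \<in> S \<and> (\<forall>y\<in>set (fp_states \<pi>). y \<in> F \<union> {z} \<longrightarrow> snd \<pi> = y)"
proof (induction n arbitrary: \<pi>)
  case 0 then show ?case using mdp by (auto simp: is_mdp_def fp_states_def)
next
  case (Suc n)
  from Suc.prems obtain h s a t where hs: "(h,s) \<in> set_pmf (path_pmf s0 \<delta> \<sigma> n)"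
    and a: "a \<in> set_pmf (\<sigma> h s)" and t: "t \<in> set_pmf (\<delta> s a)" and \<pi>: "\<pi> = (h@[(s,a)], t)"
    by (auto simp: split_beta)
  from Suc.IH[OF hs] have sS: "s \<in> S" and I: "\<forall>y\<in>set (fp_states (h,s)). y \<in> F\<union>{z} \<longrightarrow> s = y"
    by auto
  have aA: "a \<in> A s" using st sS a by (auto simp: is_strategy_def)
  have tS: "t \<in> S" using mdp sS aA t by (auto simp: is_mdp_def)
  have ab: "s \<in> F \<union> {z} \<Longrightarrow> t = s" using absorb[OF _ aA] t by auto
  have fp: "fp_states \<pi> = fp_states (h,s) @ [t]" by (simp add: \<pi> fp_states_def)
  have "s \<in> set (fp_states (h,s))" by (simp add: fp_states_def)
  then show ?case using I ab tS fp \<pi> by auto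
qed

lemma last_in: "snd \<pi> \<in> set (fp_states \<pi>)" by (simp add: fp_states_def)

lemma pmf_mono:
  assumes st: "is_strategy S A \<sigma>" and x: "x \<in> F \<union> {z}"
  shows "pmf (Qd \<sigma> n) x \<le> pmf (Qd \<sigma> (Suc n)) x"
proof -
  have e1: "Qd \<sigma> (Suc n) = bind_pmf (path_pmf s0 \<delta> \<sigma> n) (\<lambda>\<pi>. bind_pmf (\<sigma> (fst \<pi>) (snd \<pi>)) (\<delta> (snd \<pi>)))"
    unfolding Qd_def by (simp add: map_bind_pmf split_beta map_pmf_comp)
  have e2: "Qd \<sigma> n = bind_pmf (path_pmf s0 \<delta> \<sigma> n) (\<lambda>\<pi>. return_pmf (snd \<pi>))"
    by (simp add: Qd_def map_pmf_def)
  have "ennreal (pmf (Qd \<sigma> n) x) \<le> ennreal (pmf (Qd \<sigma> (Suc n)) x)"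
    unfolding e1 e2 ennreal_pmf_bind[of "path_pmf s0 \<delta> \<sigma> n"]
  proof (rule nn_integral_mono_AE)
    show "AE \<pi> in measure_pmf (path_pmf s0 \<delta> \<sigma> n). ennreal (pmf (return_pmf (snd \<pi>)) x)
        \<le> ennreal (pmf (bind_pmf (\<sigma> (fst \<pi>) (snd \<pi>)) (\<delta> (snd \<pi>))) x)"
      unfolding AE_measure_pmf_iff
    proof
      fix \<pi> assume \<pi>: "\<pi> \<in> set_pmf (path_pmf s0 \<delta> \<sigma> n)"
      show "ennreal (pmf (return_pmf (snd \<pi>)) x)
        \<le> ennreal (pmf (bind_pmf (\<sigma> (fst \<pi>) (snd \<pi>)) (\<delta> (snd \<pi>))) x)"
      proof (cases "snd \<pi> = x")
        case True
        have xS: "x \<in> S" using inv[OF st \<pi>] True by auto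
        have "bind_pmf (\<sigma> (fst \<pi>) x) (\<delta> x) = bind_pmf (\<sigma> (fst \<pi>) x) (\<lambda>_. return_pmf x)"
        proof (rule bind_pmf_cong[OF refl])
          fix a assume "a \<in> set_pmf (\<sigma> (fst \<pi>) x)"
          then have "a \<in> A x" using st xS by (auto simp: is_strategy_def)
          then show "\<delta> x a = return_pmf x" using absorb x by auto
        qed
        then show ?thesis using True by (simp add: bind_pmf_const)
      next
        case False then show ?thesis by simp
      qed
    qed
  qed
  then show ?thesis by simp
qed

definition b where "b \<sigma> X n = measure_pmf.prob (Qd \<sigma> n) X"

lemma b_mono:
  assumes st: "is_strategy S A \<sigma>" and X: "X \<subseteq> F \<union> {z}"
  shows "incseq (b \<sigma> X)"
proof (rule incseq_SucI)
  fix n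
  have "finite (F \<union> {z})" using finite_subset[OF F_sub finS] by simp
  then have fX: "finite X" using X by (rule finite_subset[rotated])
  show "b \<sigma> X n \<le> b \<sigma> X (Suc n)"
    unfolding b_def measure_measure_pmf_finite[OF fX]
    by (rule sum_mono) (use pmf_mono[OF st] X in auto)
qed

lemma b_conv:
  assumes st: "is_strategy S A \<sigma>" and X: "X \<subseteq> F \<union> {z}"
  shows "b \<sigma> X \<longlonglongrightarrow> lim (b \<sigma> X)"
proof -
  have "bdd_above (range (b \<sigma> X))" by (auto simp: b_def intro!: bdd_aboveI[of _ 1])
  then have "convergent (b \<sigma> X)" using LIMSEQ_incseq_SUP[OF _ b_mono[OF st X]] convergent_def by blast
  then show ?thesis by (simp add: convergent_LIMSEQ_iff)
qed

lemma reach_eq: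
  assumes st: "is_strategy S A \<sigma>" and X: "X \<subseteq> F \<union> {z}"
  shows "reach_prob s0 \<delta> \<sigma> X = lim (b \<sigma> X)"
proof -
  have "measure_pmf.prob (path_pmf s0 \<delta> \<sigma> n) {\<pi>. \<exists>x\<in>set (fp_states \<pi>). x \<in> X} = b \<sigma> X n" for n
  proof -
    let ?M = "path_pmf s0 \<delta> \<sigma> n"
    have "{\<pi>. \<exists>x\<in>set (fp_states \<pi>). x \<in> X} \<inter> set_pmf ?M = (snd -` X) \<inter> set_pmf ?M"
    proof (intro set_eqI iffI)
      fix \<pi> assume "\<pi> \<in> {\<pi>. \<exists>x\<in>set (fp_states \<pi>). x \<in> X} \<inter> set_pmf ?M"
      then obtain x where "x \<in> set (fp_states \<pi>)" "x \<in> X" "\<pi> \<in> set_pmf ?M" by auto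
      moreover have "x \<in> F \<union> {z}" using X \<open>x \<in> X\<close> by auto
      ultimately show "\<pi> \<in> (snd -` X) \<inter> set_pmf ?M" using inv[OF st, of \<pi> n] by auto
    next
      fix \<pi> assume "\<pi> \<in> (snd -` X) \<inter> set_pmf ?M"
      then show "\<pi> \<in> {\<pi>. \<exists>x\<in>set (fp_states \<pi>). x \<in> X} \<inter> set_pmf ?M" using last_in[of \<pi>] by auto
    qed
    then have "measure_pmf.prob ?M {\<pi>. \<exists>x\<in>set (fp_states \<pi>). x \<in> X} = measure_pmf.prob ?M (snd -` X)"
      by (metis (no_types) measure_Int_set_pmf)
    then show ?thesis by (simp add: b_def Qd_def)
  qed
  then show ?thesis unfolding reach_prob_def by simp
qed

lemma wr_eq:
  assumes st: "is_strategy S A \<sigma>" and \<pi>: "\<pi> \<in> set_pmf (path_pmf s0 \<delta> \<sigma> n)"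
  shows "wr_value F r (fp_states \<pi>) = (if snd \<pi> \<in> F then r (snd \<pi>) else 0)"
proof (cases "snd \<pi> \<in> F")
  case True
  then obtain y where y: "find (\<lambda>x. x \<in> F) (fp_states \<pi>) = Some y"
    using last_in find_None_iff by (metis option.exhaust)
  then have "y \<in> set (fp_states \<pi>)" "y \<in> F" unfolding find_Some_iff by auto
  then have "y = snd \<pi>" using inv[OF st \<pi>] by auto
  then show ?thesis using y True by (simp add: wr_value_def)
next
  case False
  have "find (\<lambda>x. x \<in> F) (fp_states \<pi>) = None"
    unfolding find_None_iff using inv[OF st \<pi>] False by auto
  then show ?thesis using False by (simp add: wr_value_def)
qed

lemma b_Un: "b \<sigma> F n + b \<sigma> {z} n = b \<sigma> (F \<union> {z}) n"
  unfolding b_def using zF measure_pmf.finite_measure_Union[where A=F and B="{z}" and M="Qd \<sigma> n"] by simp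

lemma b_S:
  assumes st: "is_strategy S A \<sigma>"
  shows "b \<sigma> (S - F) n = 1 - b \<sigma> F n"
proof -
  have "set_pmf (Qd \<sigma> n) \<subseteq> S" using inv[OF st] by (auto simp: Qd_def)
  then have "measure_pmf.prob (Qd \<sigma> n) S = 1"
  proof -
    have "measure_pmf.prob (Qd \<sigma> n) S = measure_pmf.prob (Qd \<sigma> n) (S \<inter> set_pmf (Qd \<sigma> n))"
      by (simp add: measure_Int_set_pmf)
    also have "S \<inter> set_pmf (Qd \<sigma> n) = UNIV \<inter> set_pmf (Qd \<sigma> n)" using \<open>set_pmf (Qd \<sigma> n) \<subseteq> S\<close> by auto
    also have "measure_pmf.prob (Qd \<sigma> n) (UNIV \<inter> set_pmf (Qd \<sigma> n)) = 1"
      using measure_Int_set_pmf[of "Qd \<sigma> n" UNIV] measure_pmf.prob_space[of "Qd \<sigma> n"] by simp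
    finally show ?thesis .
  qed
  then show ?thesis unfolding b_def using F_sub by (simp add: measure_pmf.finite_measure_Diff)
qed

lemma lim_F_z:
  assumes st: "is_strategy S A \<sigma>"
  shows "lim (b \<sigma> {z}) = 1 - lim (b \<sigma> F)"
proof -
  have "reach_prob s0 \<delta> \<sigma> (F \<union> {z}) = 1" using stop st by (auto simp: stopping_def)
  then have 1: "lim (b \<sigma> (F \<union> {z})) = 1" using reach_eq[OF st] by simp
  have "(\<lambda>n. b \<sigma> F n + b \<sigma> {z} n) \<longlonglongrightarrow> lim (b \<sigma> F) + lim (b \<sigma> {z})"
    by (intro tendsto_add b_conv[OF st]) auto
  then have "b \<sigma> (F \<union> {z}) \<longlonglongrightarrow> lim (b \<sigma> F) + lim (b \<sigma> {z})" using b_Un by simp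
  then have "lim (b \<sigma> (F \<union> {z})) = lim (b \<sigma> F) + lim (b \<sigma> {z})" by (simp add: limI)
  then show ?thesis using 1 by simp
qed

lemma outcome_eq:
  assumes st: "is_strategy S A \<sigma>" and o: "ov \<in> r ` F \<union> {0}"
  shows "outcome_prob s0 \<delta> \<sigma> F r ov = reach_prob s0 \<delta> \<sigma> (obtainset F r z ov)"
proof (cases "ov = 0")
  case True
  have "measure_pmf.prob (path_pmf s0 \<delta> \<sigma> n) {\<pi>. wr_value F r (fp_states \<pi>) = ov} = 1 - b \<sigma> F n" for n
  proof -
    let ?M = "path_pmf s0 \<delta> \<sigma> n"
    have "{\<pi>. wr_value F r (fp_states \<pi>) = ov} \<inter> set_pmf ?M = (snd -` (S - F)) \<inter> set_pmf ?M"
      using inv[OF st] wr_eq[OF st] r_nonzero True by auto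
    then have "measure_pmf.prob ?M {\<pi>. wr_value F r (fp_states \<pi>) = ov} = measure_pmf.prob ?M (snd -` (S - F))"
      by (metis (no_types) measure_Int_set_pmf)
    then show ?thesis using b_S[OF st, of n] by (simp add: b_def Qd_def)
  qed
  then have "outcome_prob s0 \<delta> \<sigma> F r ov = lim (\<lambda>n. 1 - b \<sigma> F n)"
    unfolding outcome_prob_def by simp
  also have "\<dots> = 1 - lim (b \<sigma> F)"
    by (intro limI tendsto_diff tendsto_const b_conv[OF st]) auto
  also have "\<dots> = reach_prob s0 \<delta> \<sigma> (obtainset F r z ov)"
    using True lim_F_z[OF st] reach_eq[OF st, of "{z}"] by (simp add: obtainset_def)
  finally show ?thesis .
next
  case False
  have "measure_pmf.prob (path_pmf s0 \<delta> \<sigma> n) {\<pi>. wr_value F r (fp_states \<pi>) = ov} = b \<sigma> (obtainset F r z ov) n" for n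
  proof -
    let ?M = "path_pmf s0 \<delta> \<sigma> n"
    have "{\<pi>. wr_value F r (fp_states \<pi>) = ov} \<inter> set_pmf ?M = (snd -` (obtainset F r z ov)) \<inter> set_pmf ?M"
      using wr_eq[OF st] False by (auto simp: obtainset_def split: if_splits)
    then have "measure_pmf.prob ?M {\<pi>. wr_value F r (fp_states \<pi>) = ov} = measure_pmf.prob ?M (snd -` (obtainset F r z ov))"
      by (metis (no_types) measure_Int_set_pmf)
    then show ?thesis by (simp add: b_def Qd_def)
  qed
  then have "outcome_prob s0 \<delta> \<sigma> F r ov = lim (b \<sigma> (obtainset F r z ov))"
    unfolding outcome_prob_def by simp
  also have "\<dots> = reach_prob s0 \<delta> \<sigma> (obtainset F r z ov)"
  proof -
    have "obtainset F r z ov \<subseteq> F \<union> {z}" using False by (auto simp: obtainset_def)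
    then show ?thesis using reach_eq[OF st, of "obtainset F r z ov"] by simp
  qed
  finally show ?thesis .
qed

lemma finF: "finite F" using finite_subset[OF F_sub finS] .

lemma set_outs: "set (outcomes F r) = r ` F \<union> {0}" "distinct (outcomes F r)"
proof -
  have "finite (r ` F \<union> {0})" using finF by simp
  then show "set (outcomes F r) = r ` F \<union> {0}" unfolding outcomes_def by (rule set_sorted_list_of_set)
  show "distinct (outcomes F r)" unfolding outcomes_def by (rule distinct_sorted_list_of_set)
qed

lemma obt_sub: "obtainset F r z ov \<subseteq> F \<union> {z}"
  by (auto simp: obtainset_def)

lemma Union_obt: "(\<Union>ov\<in>r ` F \<union> {0}. obtainset F r z ov) = F \<union> {z}"
  using r_nonzero by (auto simp: obtainset_def split: if_splits)

lemma disj: "disjoint_family_on (obtainset F r z) (r ` F \<union> {0})"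
  using zF by (auto simp: disjoint_family_on_def obtainset_def)

lemma sum_reach:
  assumes st: "is_strategy S A \<sigma>"
  shows "(\<Sum>ov\<in>r ` F \<union> {0}. reach_prob s0 \<delta> \<sigma> (obtainset F r z ov)) = 1"
proof -
  let ?O = "r ` F \<union> {0}"
  have fO: "finite ?O" using finF by simp
  have t1: "(\<lambda>n. \<Sum>ov\<in>?O. b \<sigma> (obtainset F r z ov) n) \<longlonglongrightarrow> (\<Sum>ov\<in>?O. lim (b \<sigma> (obtainset F r z ov)))"
    by (intro tendsto_sum b_conv[OF st] obt_sub)
  have e: "(\<lambda>n. \<Sum>ov\<in>?O. b \<sigma> (obtainset F r z ov) n) = b \<sigma> (F \<union> {z})"
  proof
    fix n
    show "(\<Sum>ov\<in>?O. b \<sigma> (obtainset F r z ov) n) = b \<sigma> (F \<union> {z}) n"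
      unfolding b_def using measure_pmf.finite_measure_finite_Union[OF fO _ disj, of "Qd \<sigma> n"] Union_obt
      by simp
  qed
  have "reach_prob s0 \<delta> \<sigma> (F \<union> {z}) = 1" using stop st by (auto simp: stopping_def)
  then have "lim (b \<sigma> (F \<union> {z})) = 1" using reach_eq[OF st] by simp
  then have t2: "b \<sigma> (F \<union> {z}) \<longlonglongrightarrow> 1" using b_conv[OF st, of "F \<union> {z}"] by simp
  have "(\<Sum>ov\<in>?O. lim (b \<sigma> (obtainset F r z ov))) = 1"
    using t1 t2 e LIMSEQ_unique by metis
  then show ?thesis using reach_eq[OF st obt_sub] by simp
qed

end

theorem mainTheorem4:
  fixes S :: "'s set" and s0 :: 's and A :: "'s \<Rightarrow> 'act set" and \<delta> :: "'s \<Rightarrow> 'act \<Rightarrow> 's pmf"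
    and F :: "'s set" and r :: "'s \<Rightarrow> rat" and z :: 's
  assumes mdp: "is_mdp S s0 A \<delta>"
    and F_sub: "F \<subseteq> S"
    and F_absorbing: "\<forall>s\<in>F. \<forall>a\<in>A s. \<delta> s a = return_pmf s"
    and r_nonzero: "\<forall>s\<in>F. r s \<noteq> 0"
    and stop: "stopping S s0 A \<delta> F z"
  shows "{prospect s0 \<delta> \<sigma> F r | \<sigma>. is_strategy S A \<sigma>} =
         {(outcomes F r, p) | p. p \<in> pareto S s0 A \<delta> (map (obtainset F r z) (outcomes F r))}"
proof -
  interpret W: wrs S s0 A \<delta> F r z by (rule wrs.intro[OF assms])
  define Os where "Os = outcomes F r"
  define Q where "Q = map (obtainset F r z) Os"
  define qv where "qv \<sigma> = map (\<lambda>ov. reach_prob s0 \<delta> \<sigma> (obtainset F r z ov)) Os" for \<sigma>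
  have lenQ: "length Q = length Os" by (simp add: Q_def)
  have qvi: "qv \<sigma> ! i = reach_prob s0 \<delta> \<sigma> (Q ! i)" if "i < length Os" for \<sigma> i
    using that by (simp add: qv_def Q_def)
  have prosp: "prospect s0 \<delta> \<sigma> F r = (Os, qv \<sigma>)" if st: "is_strategy S A \<sigma>" for \<sigma>
    unfolding prospect_def qv_def Os_def
    using W.outcome_eq[OF st] W.set_outs by (auto intro!: map_cong)
  have sumq: "(\<Sum>i<length Os. qv \<sigma> ! i) = 1" if st: "is_strategy S A \<sigma>" for \<sigma>
  proof -
    have "(\<Sum>i<length Os. qv \<sigma> ! i) = sum_list (qv \<sigma>)"
      by (simp add: sum_list_sum_nth qv_def atLeast0LessThan)
    also have "\<dots> = (\<Sum>ov\<in>set Os. reach_prob s0 \<delta> \<sigma> (obtainset F r z ov))"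
      unfolding qv_def using W.set_outs by (simp add: Os_def sum_list_distinct_conv_sum_set)
    also have "\<dots> = 1" using W.sum_reach[OF st] W.set_outs by (simp add: Os_def)
    finally show ?thesis .
  qed
  have ach: "qv \<sigma> \<in> achievable S s0 A \<delta> Q" if st: "is_strategy S A \<sigma>" for \<sigma>
    unfolding achievable_def using st qvi lenQ by (auto simp: qv_def)
  have eq: "v = qv \<sigma>" if st: "is_strategy S A \<sigma>" and v: "v \<in> achievable S s0 A \<delta> Q"
    and le: "vec_le (qv \<sigma>) v" for \<sigma> v
  proof -
    from v obtain \<sigma>' where lv: "length v = length Os" and st': "is_strategy S A \<sigma>'"
      and vle: "\<forall>i<length Os. v ! i \<le> reach_prob s0 \<delta> \<sigma>' (Q ! i)"
      unfolding achievable_def lenQ by auto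
    have le1: "qv \<sigma> ! i \<le> v ! i" if "i < length Os" for i
      using le that by (auto simp: vec_le_def qv_def)
    have "(\<Sum>i<length Os. v ! i) \<le> (\<Sum>i<length Os. qv \<sigma>' ! i)"
    proof (rule sum_mono)
      fix i assume "i \<in> {..<length Os}"
      then show "v ! i \<le> qv \<sigma>' ! i" using vle qvi[of i \<sigma>'] by simp
    qed
    then have "(\<Sum>i<length Os. v ! i - qv \<sigma> ! i) \<le> 0"
      using sumq[OF st] sumq[OF st'] by (simp add: sum_subtractf)
    moreover have nn: "\<forall>i\<in>{..<length Os}. 0 \<le> v ! i - qv \<sigma> ! i" using le1 by auto
    moreover have "0 \<le> (\<Sum>i<length Os. v ! i - qv \<sigma> ! i)" using nn by (intro sum_nonneg) auto
    ultimately have s0: "(\<Sum>i<length Os. v ! i - qv \<sigma> ! i) = 0" by linarith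
    have "\<forall>i\<in>{..<length Os}. v ! i - qv \<sigma> ! i = 0"
      using iffD1[OF sum_nonneg_eq_0_iff[OF finite_lessThan] s0] nn by blast
    then show ?thesis using lv by (intro nth_equalityI) (auto simp: qv_def)
  qed
  show ?thesis
  proof (intro set_eqI iffI)
    fix x assume "x \<in> {prospect s0 \<delta> \<sigma> F r | \<sigma>. is_strategy S A \<sigma>}"
    then obtain \<sigma> where st: "is_strategy S A \<sigma>" and x: "x = prospect s0 \<delta> \<sigma> F r" by auto
    have "qv \<sigma> \<in> pareto S s0 A \<delta> Q"
      unfolding pareto_def using ach[OF st] eq[OF st] by blast
    then show "x \<in> {(outcomes F r, p) | p. p \<in> pareto S s0 A \<delta> (map (obtainset F r z) (outcomes F r))}"
      using prosp[OF st] x by (auto simp: Q_def Os_def)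
  next
    fix x assume "x \<in> {(outcomes F r, p) | p. p \<in> pareto S s0 A \<delta> (map (obtainset F r z) (outcomes F r))}"
    then obtain p where x: "x = (Os, p)" and p: "p \<in> pareto S s0 A \<delta> Q"
      by (auto simp: Q_def Os_def)
    from p have pa: "p \<in> achievable S s0 A \<delta> Q"
      and np: "\<not> (\<exists>v\<in>achievable S s0 A \<delta> Q. p \<noteq> v \<and> vec_le p v)"
      unfolding pareto_def by auto
    from pa obtain \<sigma> where lp: "length p = length Os" and st: "is_strategy S A \<sigma>"
      and ple: "\<forall>i<length Os. p ! i \<le> reach_prob s0 \<delta> \<sigma> (Q ! i)"
      unfolding achievable_def lenQ by auto
    have "vec_le p (qv \<sigma>)" unfolding vec_le_def using lp ple qvi by (auto simp: qv_def)
    then have "p = qv \<sigma>" using np ach[OF st] by blast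
    then have "x = prospect s0 \<delta> \<sigma> F r" using x prosp[OF st] by simp
    then show "x \<in> {prospect s0 \<delta> \<sigma> F r | \<sigma>. is_strategy S A \<sigma>}" using st by auto
  qed
qed

end
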